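(* Let $\mathcal T$ be a locally finite tessellation of ${\mathbb X}$ and $x\in{\mathbb X}$. Let $C=\bigcap_{T\in\mathcal T,\,x\in T}T$. Then $C$ is a cell of $\mathcal T$ and $x\in C^r$.
   Context: ${\mathbb X}$ is $\mathbb R^n$, the unit sphere $\mathbb S^n$, or hyperbolic $n$-space. A hyperplane is a complete totally geodesic submanifold of codimension 1; closed half-spaces are the closures of the two components of its complement. A polyhedron is a nonempty intersection of a family of closed half-spaces whose boundary hyperplanes form a locally finite family; its relative interior $C^r$ is its interior in the smallest complete totally geodesic submanifold containing it; it is thick if it has nonempty interior in ${\mathbb X}$. A tessellation is a set of thick polyhedra (tiles) covering ${\mathbb X}$ with pairwise disjoint interiors; locally finite means every compact set meets only finitely many tiles. A cell of $\mathcal T$ is a nonempty intersection $C$ of tiles such that for every tile $T$ either $C\subseteq T$ or $C^r\cap T=\emptyset$. *)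

theory Defs
  imports "HOL-Analysis.Analysis"
begin

text \<open>The three model spaces, realised inside an ambient Euclidean space 'a.
  Euc: X = 'a itself (n = DIM('a)).
  Sph: X = unit sphere of 'a (n = DIM('a) - 1).
  Hyp: X = hyperboloid model in 'a with Lorentzian form whose time direction is a
       fixed basis vector (n = DIM('a) - 1).\<close>

datatype geom = Euc | Sph | Hyp

definition time_vec :: "'a::euclidean_space" where
  "time_vec = (SOME b. b \<in> Basis)"

definition lorentz :: "'a::euclidean_space \<Rightarrow> 'a \<Rightarrow> real" where
  "lorentz x y = x \<bullet> y - 2 * (x \<bullet> time_vec) * (y \<bullet> time_vec)"

definition space :: "geom \<Rightarrow> 'a::euclidean_space set" where
  "space k = (case k of
      Euc \<Rightarrow> UNIV
    | Sph \<Rightarrow> sphere 0 1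
    | Hyp \<Rightarrow> {x. lorentz x x = -1 \<and> x \<bullet> time_vec > 0})"

text \<open>Ambient sets cutting out the complete totally geodesic submanifolds:
  affine subspaces (Euclidean case) or linear subspaces (spherical/hyperbolic case).\<close>
definition ambient_flat :: "geom \<Rightarrow> 'a::euclidean_space set \<Rightarrow> bool" where
  "ambient_flat k A = (if k = Euc then affine A else subspace A)"

definition planes :: "geom \<Rightarrow> 'a::euclidean_space set set" where
  "planes k = {space k \<inter> A | A. ambient_flat k A \<and> space k \<inter> A \<noteq> {}}"

definition hyperplanes :: "geom \<Rightarrow> 'a::euclidean_space set set" where
  "hyperplanes k = {space k \<inter> A | A. ambient_flat k A \<and> aff_dim A = int DIM('a) - 1
                                     \<and> space k \<inter> A \<noteq> {}}"

definition halfspaces :: "geom \<Rightarrow> 'a::euclidean_space set \<Rightarrow> 'a set set" where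
  "halfspaces k H = {space k \<inter> closure S | S. S \<in> components (space k - H)}"

definition locally_finite_fam :: "geom \<Rightarrow> 'a::euclidean_space set set \<Rightarrow> bool" where
  "locally_finite_fam k F =
     (\<forall>x\<in>space k. \<exists>e>0. finite {H \<in> F. H \<inter> ball x e \<noteq> {}})"

definition polyhedron :: "geom \<Rightarrow> 'a::euclidean_space set \<Rightarrow> bool" where
  "polyhedron k P =
     (P \<noteq> {} \<and> (\<exists>\<H> F. \<H> \<subseteq> hyperplanes k \<and> locally_finite_fam k \<H>
        \<and> (\<forall>S\<in>F. \<exists>H\<in>\<H>. S \<in> halfspaces k H)
        \<and> P = space k \<inter> \<Inter>F))"

definition plane_hull :: "geom \<Rightarrow> 'a::euclidean_space set \<Rightarrow> 'a set" where
  "plane_hull k C = \<Inter>{P \<in> planes k. C \<subseteq> P}"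

definition rel_int :: "geom \<Rightarrow> 'a::euclidean_space set \<Rightarrow> 'a set" where
  "rel_int k C = {x \<in> C. \<exists>e>0. ball x e \<inter> plane_hull k C \<subseteq> C}"

definition int_X :: "geom \<Rightarrow> 'a::euclidean_space set \<Rightarrow> 'a set" where
  "int_X k C = {x \<in> C. \<exists>e>0. ball x e \<inter> space k \<subseteq> C}"

definition thick :: "geom \<Rightarrow> 'a::euclidean_space set \<Rightarrow> bool" where
  "thick k P = (int_X k P \<noteq> {})"

definition tessellation :: "geom \<Rightarrow> 'a::euclidean_space set set \<Rightarrow> bool" where
  "tessellation k \<T> =
     ((\<forall>T\<in>\<T>. polyhedron k T \<and> thick k T)
      \<and> \<Union>\<T> = space k
      \<and> (\<forall>T1\<in>\<T>. \<forall>T2\<in>\<T>. T1 \<noteq> T2 \<longrightarrow> int_X k T1 \<inter> int_X k T2 = {}))"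

definition locally_finite_tess :: "geom \<Rightarrow> 'a::euclidean_space set set \<Rightarrow> bool" where
  "locally_finite_tess k \<T> =
     (tessellation k \<T> \<and>
      (\<forall>K. compact K \<and> K \<subseteq> space k \<longrightarrow> finite {T \<in> \<T>. T \<inter> K \<noteq> {}}))"

definition cell :: "geom \<Rightarrow> 'a::euclidean_space set set \<Rightarrow> 'a set \<Rightarrow> bool" where
  "cell k \<T> C =
     (C \<noteq> {} \<and> (\<exists>\<S>. \<S> \<noteq> {} \<and> \<S> \<subseteq> \<T> \<and> C = \<Inter>\<S>)
      \<and> (\<forall>T\<in>\<T>. C \<subseteq> T \<or> rel_int k C \<inter> T = {}))"

end

theory Submission
  imports Defs
begin


lemma time_vec_Basis: "(time_vec::'a::euclidean_space) \<in> Basis"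
  unfolding time_vec_def using nonempty_Basis by (metis ex_in_conv someI_ex)

lemma time_vec_unit [simp]: "(time_vec::'a::euclidean_space) \<bullet> time_vec = 1"
  by (simp add: inner_Basis[OF time_vec_Basis time_vec_Basis])

lemma lorentz_scale: "lorentz (c *\<^sub>R w) (c *\<^sub>R w) = c^2 * lorentz w w"
  unfolding lorentz_def by (simp add: power2_eq_square algebra_simps)

lemma continuous_on_lorentz [continuous_intros]:
  "continuous_on S (\<lambda>w. lorentz (w::'a::euclidean_space) w)"
  unfolding lorentz_def by (intro continuous_intros)

lemma lorentz_split:
  fixes w :: "'a::euclidean_space"
  shows "lorentz w w = (norm (w - (w \<bullet> time_vec) *\<^sub>R time_vec))^2 - (w \<bullet> time_vec)^2"
proof -
  have "(norm (w - (w \<bullet> time_vec) *\<^sub>R time_vec))^2 = (w - (w \<bullet> time_vec) *\<^sub>R time_vec) \<bullet> (w - (w \<bullet> time_vec) *\<^sub>R time_vec)"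
    by (simp add: power2_norm_eq_inner)
  also have "\<dots> = w \<bullet> w - (w \<bullet> time_vec)^2"
    by (simp add: inner_diff_left inner_diff_right inner_commute power2_eq_square)
  finally show ?thesis unfolding lorentz_def by (simp add: power2_eq_square)
qed

definition Om :: "geom \<Rightarrow> 'a::euclidean_space set" where
  "Om k = (case k of Euc \<Rightarrow> UNIV | Sph \<Rightarrow> - {0}
          | Hyp \<Rightarrow> {w. w \<bullet> time_vec > 0 \<and> lorentz w w < 0})"

definition cf :: "geom \<Rightarrow> 'a::euclidean_space \<Rightarrow> real" where
  "cf k w = (case k of Euc \<Rightarrow> 1 | Sph \<Rightarrow> 1 / norm w | Hyp \<Rightarrow> 1 / sqrt (- lorentz w w))"

definition NN :: "geom \<Rightarrow> 'a::euclidean_space \<Rightarrow> 'a" where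
  "NN k w = cf k w *\<^sub>R w"

lemma fut_iff:
  fixes w :: "'a::euclidean_space"
  shows "(w \<bullet> time_vec > 0 \<and> lorentz w w < 0) \<longleftrightarrow> norm (w - (w \<bullet> time_vec) *\<^sub>R time_vec) < w \<bullet> time_vec"
proof -
  have "(norm (w - (w \<bullet> time_vec) *\<^sub>R time_vec))^2 < (w \<bullet> time_vec)^2 \<and> w \<bullet> time_vec > 0
     \<longleftrightarrow> norm (w - (w \<bullet> time_vec) *\<^sub>R time_vec) < w \<bullet> time_vec"
  proof
    assume "(norm (w - (w \<bullet> time_vec) *\<^sub>R time_vec))^2 < (w \<bullet> time_vec)^2 \<and> w \<bullet> time_vec > 0"
    then show "norm (w - (w \<bullet> time_vec) *\<^sub>R time_vec) < w \<bullet> time_vec"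
      using power2_less_imp_less by fastforce
  next
    assume a: "norm (w - (w \<bullet> time_vec) *\<^sub>R time_vec) < w \<bullet> time_vec"
    then have "w \<bullet> time_vec > 0" by (meson norm_ge_zero le_less_trans)
    with a show "(norm (w - (w \<bullet> time_vec) *\<^sub>R time_vec))^2 < (w \<bullet> time_vec)^2 \<and> w \<bullet> time_vec > 0"
      by (simp add: power_strict_mono)
  qed
  thus ?thesis by (auto simp: lorentz_split)
qed

lemma convex_fut: "convex {w::'a::euclidean_space. w \<bullet> time_vec > 0 \<and> lorentz w w < 0}"
proof -
  let ?f = "\<lambda>w::'a. w - (w \<bullet> time_vec) *\<^sub>R time_vec"
  have lin: "?f (u *\<^sub>R a + v *\<^sub>R b) = u *\<^sub>R ?f a + v *\<^sub>R ?f b" for u v a b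
    by (simp add: inner_add_left algebra_simps scaleR_add_left)
  show ?thesis unfolding fut_iff convex_def
  proof (clarsimp)
    fix a b :: 'a and u v :: real
    assume a: "norm (?f a) < a \<bullet> time_vec" and b: "norm (?f b) < b \<bullet> time_vec"
      and u: "0 \<le> u" and v: "0 \<le> v" and uv: "u + v = 1"
    have "norm (?f (u *\<^sub>R a + v *\<^sub>R b)) \<le> u * norm (?f a) + v * norm (?f b)"
      unfolding lin using u v norm_triangle_ineq[of "u *\<^sub>R ?f a" "v *\<^sub>R ?f b"] by simp
    also have "\<dots> < u * (a \<bullet> time_vec) + v * (b \<bullet> time_vec)"
    proof (cases "u = 0")
      case True then show ?thesis using uv b by simp
    next
      case False then have "u > 0" using u by simp
      then show ?thesis using a b v
        using mult_left_mono[of "norm (?f b)" "b \<bullet> time_vec" v] mult_strict_left_mono[of "norm (?f a)" "a \<bullet> time_vec" u]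
        by linarith
    qed
    finally show "norm (u *\<^sub>R a + v *\<^sub>R b - ((u *\<^sub>R a + v *\<^sub>R b) \<bullet> time_vec) *\<^sub>R time_vec)
        < (u *\<^sub>R a + v *\<^sub>R b) \<bullet> time_vec"
      by (simp add: inner_add_left)
  qed
qed

lemma open_Om: "open (Om k)"
proof (cases k)
  case Hyp
  have "open ({w::'a. w \<bullet> time_vec > 0} \<inter> {w. lorentz w w < 0})"
    by (intro open_Int open_Collect_less continuous_intros)
  thus ?thesis using Hyp by (simp add: Om_def Collect_conj_eq)
qed (auto simp: Om_def)

lemma space_sub_Om: "space k \<subseteq> Om k"
  by (cases k) (auto simp: space_def Om_def)

lemma cf_pos: "w \<in> Om k \<Longrightarrow> cf k w > 0"
  by (cases k) (auto simp: Om_def cf_def)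

lemma NN_space: "w \<in> Om k \<Longrightarrow> NN k w \<in> space k"
proof (cases k)
  case Hyp
  assume w: "w \<in> Om k"
  hence L: "lorentz w w < 0" "w \<bullet> time_vec > 0" using Hyp by (auto simp: Om_def)
  have "lorentz (NN k w) (NN k w) = -1" using L Hyp
    by (simp add: NN_def cf_def lorentz_scale power_divide)
  moreover have "NN k w \<bullet> time_vec > 0" using L Hyp by (simp add: NN_def cf_def)
  ultimately show ?thesis using Hyp by (simp add: space_def)
qed (auto simp: Om_def NN_def cf_def space_def)

lemma cf_space: "z \<in> space k \<Longrightarrow> cf k z = 1"
  by (cases k) (auto simp: space_def cf_def)

lemma NN_id: "z \<in> space k \<Longrightarrow> NN k z = z"
  by (simp add: NN_def cf_space)

lemma continuous_NN: "continuous_on (Om k) (NN k)"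
proof (cases k)
  case Euc then show ?thesis by (simp add: NN_def cf_def)
next
  case Sph then show ?thesis unfolding NN_def cf_def Om_def
    by (auto intro!: continuous_on_scaleR continuous_on_divide continuous_on_const continuous_on_norm continuous_on_id)
next
  case Hyp then show ?thesis unfolding NN_def cf_def Om_def
    by (auto intro!: continuous_on_scaleR continuous_on_divide continuous_on_const continuous_on_real_sqrt
       continuous_on_minus continuous_on_lorentz continuous_on_id)
qed

lemma closed_space: "closed (space k :: 'a::euclidean_space set)"
proof (cases k)
  case Hyp
  have "space k = {w::'a. lorentz w w = -1} \<inter> {w. w \<bullet> time_vec \<ge> 0}"
  proof -
    have "w \<bullet> time_vec \<noteq> 0" if "lorentz w w = -1" for w :: 'a
    proof
      assume "w \<bullet> time_vec = 0"
      then have "(norm (w - (w \<bullet> time_vec) *\<^sub>R time_vec))^2 = -1"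
        using that lorentz_split[of w] by simp
      then show False using zero_le_power2[of "norm (w - (w \<bullet> time_vec) *\<^sub>R time_vec)"] by linarith
    qed
    thus ?thesis using Hyp by (force simp: space_def)
  qed
  moreover have "closed \<dots>"
    by (intro closed_Int closed_Collect_eq closed_Collect_le continuous_intros)
  ultimately show ?thesis by simp
qed (auto simp: space_def)

lemma convex_Om_half:
  assumes "k \<noteq> Euc \<longrightarrow> b = 0"
  shows "convex (Om k \<inter> {w::'a::euclidean_space. a \<bullet> w > b})"
proof (cases k)
  case Euc then show ?thesis by (simp add: Om_def convex_halfspace_gt)
next
  case Sph
  then have "Om k \<inter> {w::'a. a \<bullet> w > b} = {w. a \<bullet> w > b}" using assms by (auto simp: Om_def)
  then show ?thesis by (simp add: convex_halfspace_gt)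
next
  case Hyp then show ?thesis by (simp add: Om_def convex_Int convex_fut convex_halfspace_gt)
qed



lemma finite_baire:
  fixes g :: "'b \<Rightarrow> 'a::topological_space set"
  assumes "finite J" "open U" "U \<noteq> {}" "U \<subseteq> \<Union>(g ` J)" "\<forall>j\<in>J. closed (g j)"
  shows "\<exists>j\<in>J. \<exists>V. open V \<and> V \<noteq> {} \<and> V \<subseteq> U \<inter> g j"
  using assms
proof (induction J arbitrary: U rule: finite_induct)
  case empty then show ?case by auto
next
  case (insert j J)
  show ?case
  proof (cases "U \<subseteq> g j")
    case True then show ?thesis using insert.prems by blast
  next
    case False
    have "open (U - g j)" using insert.prems by (intro open_Diff) auto
    moreover have "U - g j \<noteq> {}" using False by blast
    moreover have "U - g j \<subseteq> \<Union>(g ` J)" using insert.prems by blast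
    ultimately obtain j' V where "j' \<in> J" "open V" "V \<noteq> {}" "V \<subseteq> (U - g j) \<inter> g j'"
      using insert.IH[of "U - g j"] insert.prems by blast
    then show ?thesis by blast
  qed
qed

lemma core:
  fixes G :: "'a::euclidean_space set" and g :: "'b \<Rightarrow> 'a set"
  assumes cG: "convex G" and yG: "y \<in> G" and iG: "interior G \<noteq> {}" and fJ: "finite J"
    and gj: "\<forall>j\<in>J. convex (g j) \<and> closed (g j)" and rho: "\<rho> > 0"
    and cov: "ball p \<rho> \<subseteq> \<Union>(g ` J)" and s: "s > 0"
    and q: "\<forall>j\<in>J. y - s *\<^sub>R (p - y) \<in> g j" and r: "r > 0"
  shows "\<exists>j\<in>J. \<exists>U. open U \<and> U \<noteq> {} \<and> U \<subseteq> G \<inter> g j \<inter> ball y r"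
proof -
  define m where "m = min \<rho> r"
  have m: "m > 0" "m \<le> \<rho>" "m \<le> r" using rho r by (auto simp: m_def)
  obtain z where z: "z \<in> interior G" using iG by blast
  define lam where "lam = min 1 (m / (2 * (norm (y - z) + 1)))"
  have den: "2 * (norm (y - z) + 1) > 0" by (simp add: add_nonneg_pos)
  have lam: "lam > 0" "lam \<le> 1" using m den by (auto simp: lam_def)
  have "lam * norm (y - z) \<le> (m / (2 * (norm (y - z) + 1))) * (norm (y - z) + 1)"
    unfolding lam_def by (intro mult_mono) (use m in auto)
  also have "\<dots> = m / 2"
  proof -
    have nz: "norm (y - z) + 1 \<noteq> 0" by (metis add_nonneg_pos norm_ge_zero zero_less_one less_irrefl)
    show ?thesis using nz by (simp add: field_simps)
  qed
  finally have lamb: "lam * norm (y - z) \<le> m / 2" .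
  define w0 where "w0 = y - lam *\<^sub>R (y - z)"
  have w0i: "w0 \<in> interior G"
    unfolding w0_def using mem_interior_convex_shrink[OF cG z yG lam] .
  then obtain d0 where d0: "d0 > 0" "ball w0 d0 \<subseteq> G" using mem_interior by blast
  define d where "d = min d0 (m / 2)"
  have d: "d > 0" "ball w0 d \<subseteq> G" "d \<le> m / 2" using d0 m by (auto simp: d_def)
  have dw0: "dist y w0 \<le> m / 2" using lamb lam by (simp add: w0_def dist_norm)
  have wball: "dist y w < m" if "w \<in> ball w0 d" for w
  proof -
    have "dist y w \<le> dist y w0 + dist w0 w" by (rule dist_triangle)
    also have "\<dots> < m / 2 + d" using that dw0 by simp
    finally show ?thesis using d by simp
  qed
  define phi where "phi = (\<lambda>w. (1 / (1 + s)) *\<^sub>R y + (s / (1 + s)) *\<^sub>R w)"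
  define B where "B = phi ` ball w0 d"
  have oB: "open B" unfolding B_def phi_def
    by (rule open_affinity) (use s in auto)
  have neB: "B \<noteq> {}" unfolding B_def using d by auto
  have sub: "B \<subseteq> G \<inter> ball y r \<inter> \<Union>(g ` J)"
  proof
    fix v assume "v \<in> B"
    then obtain w where w: "w \<in> ball w0 d" and v: "v = phi w" unfolding B_def by blast
    have wG: "w \<in> G" using w d by blast
    have dyw: "dist y w < m" using wball w .
    have vG: "v \<in> G" unfolding v phi_def
      by (rule convexD[OF cG yG wG]) (use s in \<open>auto simp: field_simps\<close>)
    have "v - y = (s / (1 + s)) *\<^sub>R (w - y)"
      unfolding v phi_def using s by (simp add: algebra_simps divide_simps scaleR_add_left[symmetric])
    hence "dist y v = (s / (1 + s)) * dist y w"
      using s by (simp add: dist_norm norm_minus_commute)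
    also have "\<dots> \<le> dist y w" by (rule mult_left_le_one_le) (use s in auto)
    finally have vr: "v \<in> ball y r" using dyw m by simp
    have "w + (p - y) \<in> ball p \<rho>"
      using dyw m by (simp add: dist_norm algebra_simps norm_minus_commute)
    then obtain j where j: "j \<in> J" "w + (p - y) \<in> g j" using cov by blast
    have "v = (s / (1 + s)) *\<^sub>R (w + (p - y)) + (1 / (1 + s)) *\<^sub>R (y - s *\<^sub>R (p - y))"
      unfolding v phi_def using s by (simp add: algebra_simps divide_simps scaleR_add_left[symmetric])
    also have "\<dots> \<in> g j"
      by (rule convexD) (use gj j q s in \<open>auto simp: field_simps\<close>)
    finally show "v \<in> G \<inter> ball y r \<inter> \<Union>(g ` J)" using vG vr j by blast
  qed
  obtain j V where "j \<in> J" "open V" "V \<noteq> {}" "V \<subseteq> B \<inter> g j"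
    using finite_baire[OF fJ oB neB, of g] sub gj by blast
  then show ?thesis using sub by blast
qed



definition good :: "geom \<Rightarrow> 'a::euclidean_space set \<Rightarrow> bool" where
  "good k G = (closed G \<and> convex G \<and> (k \<noteq> Euc \<longrightarrow> cone G))"

definition fhull :: "geom \<Rightarrow> 'a::euclidean_space set \<Rightarrow> 'a set" where
  "fhull k C = (if k = Euc then affine hull C else span C)"

lemma scale_mem:
  assumes "good k G" "w \<in> Om k"
  shows "z \<in> G \<longleftrightarrow> cf k w *\<^sub>R z \<in> G"
proof (cases "k = Euc")
  case True then show ?thesis by (simp add: cf_def)
next
  case False
  then have cG: "cone G" using assms by (simp add: good_def)
  have c: "cf k w > 0" using cf_pos[OF assms(2)] .
  show ?thesis
  proof
    assume "z \<in> G" then show "cf k w *\<^sub>R z \<in> G" using cG c by (simp add: cone_def)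
  next
    assume a: "cf k w *\<^sub>R z \<in> G"
    have "(1 / cf k w) *\<^sub>R (cf k w *\<^sub>R z) \<in> G"
      using cG c a unfolding cone_def by (meson less_eq_real_def zero_less_divide_1_iff)
    moreover have "(1 / cf k w) *\<^sub>R (cf k w *\<^sub>R z) = z" using c by simp
    ultimately show "z \<in> G" by simp
  qed
qed

lemma NN_mem: "good k G \<Longrightarrow> w \<in> Om k \<Longrightarrow> NN k w \<in> G \<longleftrightarrow> w \<in> G"
  unfolding NN_def using scale_mem by blast

lemma hyperplane_normal:
  fixes H :: "'a::euclidean_space set"
  assumes "H \<in> hyperplanes k"
  shows "\<exists>a b. a \<noteq> 0 \<and> H = space k \<inter> {z. a \<bullet> z = b} \<and> (k \<noteq> Euc \<longrightarrow> b = 0)"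
proof -
  obtain A where A: "H = space k \<inter> A" "ambient_flat k A" "aff_dim A = int DIM('a) - 1"
    using assms unfolding hyperplanes_def by blast
  have aA: "affine A" using A(2) by (auto simp: ambient_flat_def subspace_imp_affine split: if_splits)
  have "aff_dim A = int (DIM('a) - 1)" using A(3) DIM_positive[where 'a='a] by (simp add: of_nat_diff)
  then obtain a b where ab: "a \<noteq> 0" "affine hull A = {x. a \<bullet> x = b}"
    unfolding aff_dim_eq_hyperplane by blast
  have AA: "A = {x. a \<bullet> x = b}" by (metis ab(2) aA affine_hull_eq)
  have "k \<noteq> Euc \<longrightarrow> b = 0"
  proof
    assume "k \<noteq> Euc"
    then have "subspace A" using A(2) by (simp add: ambient_flat_def)
    then have "0 \<in> A" by (rule subspace_0)
    then show "b = 0" using AA by simp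
  qed
  then show ?thesis using ab AA A by blast
qed

lemma half_image:
  fixes a :: "'a::euclidean_space"
  assumes "k \<noteq> Euc \<longrightarrow> b = 0"
  shows "space k \<inter> {z. a \<bullet> z > b} = NN k ` (Om k \<inter> {w. a \<bullet> w > b})"
proof
  show "space k \<inter> {z. a \<bullet> z > b} \<subseteq> NN k ` (Om k \<inter> {w. a \<bullet> w > b})"
  proof
    fix z assume z: "z \<in> space k \<inter> {z. a \<bullet> z > b}"
    then have "z = NN k z" "z \<in> Om k" using NN_id[of z k] space_sub_Om[of k] by auto
    then show "z \<in> NN k ` (Om k \<inter> {w. a \<bullet> w > b})" using z by blast
  qed
next
  show "NN k ` (Om k \<inter> {w. a \<bullet> w > b}) \<subseteq> space k \<inter> {z. a \<bullet> z > b}"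
  proof
    fix v assume "v \<in> NN k ` (Om k \<inter> {w. a \<bullet> w > b})"
    then obtain w where w: "w \<in> Om k" "a \<bullet> w > b" "v = NN k w" by blast
    have "a \<bullet> v > b"
    proof (cases "k = Euc")
      case True then show ?thesis using w by (simp add: NN_def cf_def)
    next
      case False then have "b = 0" using assms by simp
      then show ?thesis using w cf_pos[OF w(1)] by (simp add: NN_def)
    qed
    then show "v \<in> space k \<inter> {z. a \<bullet> z > b}" using NN_space w by blast
  qed
qed

lemma half_connected:
  fixes a :: "'a::euclidean_space"
  assumes "k \<noteq> Euc \<longrightarrow> b = 0"
  shows "connected (space k \<inter> {z. a \<bullet> z > b})"
  unfolding half_image[OF assms]
  by (rule connected_continuous_image[OF continuous_on_subset[OF continuous_NN]])
     (auto intro: convex_connected convex_Om_half[OF assms])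

lemma near:
  assumes "x \<in> space k" "e > 0"
  shows "\<exists>d>0. ball x d \<subseteq> Om k \<and> (\<forall>w\<in>ball x d. NN k w \<in> ball x e)"
proof -
  have xO: "x \<in> Om k" using assms space_sub_Om by blast
  obtain d1 where d1: "d1 > 0" "\<forall>x'\<in>Om k. dist x' x < d1 \<longrightarrow> dist (NN k x') (NN k x) < e"
    using continuous_NN[of k] xO assms(2) unfolding continuous_on_iff by meson
  obtain d2 where d2: "d2 > 0" "ball x d2 \<subseteq> Om k" using open_Om xO open_contains_ball_eq by blast
  define d where "d = min d1 d2"
  have "d > 0" using d1 d2 by (simp add: d_def)
  moreover have "ball x d \<subseteq> Om k" using d2 by (auto simp: d_def)
  moreover have "\<forall>w\<in>ball x d. NN k w \<in> ball x e"
    using d1 d2 NN_id[OF assms(1)] by (auto simp: d_def dist_commute subset_iff)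
  ultimately show ?thesis by blast
qed

lemma half_closure:
  fixes a :: "'a::euclidean_space"
  assumes "a \<noteq> 0" "k \<noteq> Euc \<longrightarrow> b = 0"
  shows "space k \<inter> {z. a \<bullet> z \<ge> b} \<subseteq> closure (space k \<inter> {z. a \<bullet> z > b})"
proof
  fix z assume z: "z \<in> space k \<inter> {z. a \<bullet> z \<ge> b}"
  show "z \<in> closure (space k \<inter> {z. a \<bullet> z > b})"
  proof (cases "a \<bullet> z > b")
    case True then show ?thesis using z by (intro closure_subset[THEN subsetD]) auto
  next
    case False
    then have azb: "a \<bullet> z = b" using z by simp
    have zO: "z \<in> Om k" using z space_sub_Om by blast
    obtain r where r: "r > 0" "ball z r \<subseteq> Om k" using open_Om zO open_contains_ball_eq by blast
    have ev: "eventually (\<lambda>t. z + t *\<^sub>R a \<in> Om k \<and> a \<bullet> (z + t *\<^sub>R a) > b) (at_right 0)"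
      unfolding eventually_at_right_field
    proof (intro exI[of _ "r / norm a"] conjI allI impI)
      show "0 < r / norm a" using r assms by simp
      fix t :: real assume t: "0 < t" "t < r / norm a"
      have "norm (t *\<^sub>R a) < r" using t assms by (simp add: field_simps)
      then show "z + t *\<^sub>R a \<in> Om k" using r by (auto simp: dist_norm)
      show "a \<bullet> (z + t *\<^sub>R a) > b" using t assms azb by (simp add: inner_add_right)
    qed
    have "((\<lambda>t. z + t *\<^sub>R a) \<longlongrightarrow> z + 0 *\<^sub>R a) (at_right 0)"
      by (intro tendsto_add tendsto_const tendsto_scaleR tendsto_ident_at)
    then have lim: "((\<lambda>t. z + t *\<^sub>R a) \<longlongrightarrow> z) (at_right 0)" by simp
    have evO: "eventually (\<lambda>t. z + t *\<^sub>R a \<in> Om k) (at_right 0)"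
      using ev by (rule eventually_mono) simp
    have lim2: "((\<lambda>t. NN k (z + t *\<^sub>R a)) \<longlongrightarrow> NN k z) (at_right 0)"
      by (rule continuous_on_tendsto_compose[OF continuous_NN lim zO evO])
    have "eventually (\<lambda>t. NN k (z + t *\<^sub>R a) \<in> closure (space k \<inter> {z. a \<bullet> z > b})) (at_right 0)"
      using ev
    proof (rule eventually_mono)
      fix t assume "z + t *\<^sub>R a \<in> Om k \<and> a \<bullet> (z + t *\<^sub>R a) > b"
      then have "NN k (z + t *\<^sub>R a) \<in> space k \<inter> {z. a \<bullet> z > b}"
        unfolding half_image[OF assms(2)] by blast
      then show "NN k (z + t *\<^sub>R a) \<in> closure (space k \<inter> {z. a \<bullet> z > b})"
        by (rule closure_subset[THEN subsetD])
    qed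
    then have "NN k z \<in> closure (space k \<inter> {z. a \<bullet> z > b})"
      by (rule Lim_in_closed_set[OF closed_closure _ trivial_limit_at_right_real lim2])
    moreover have "NN k z = z" using z NN_id[of z k] by blast
    ultimately show ?thesis by simp
  qed
qed

lemma half_good:
  fixes a :: "'a::euclidean_space"
  assumes "a \<noteq> 0" "k \<noteq> Euc \<longrightarrow> b = 0"
  shows "good k {z. a \<bullet> z \<ge> b}"
  using assms unfolding good_def
  by (auto simp: closed_halfspace_ge convex_halfspace_ge cone_def inner_scaleR_right)

lemma halfspace_case:
  fixes a :: "'a::euclidean_space"
  assumes a: "a \<noteq> 0" and kb: "k \<noteq> Euc \<longrightarrow> b = 0"
    and S0: "S0 \<in> components (space k - H)" and sub: "S0 \<subseteq> {z. a \<bullet> z > b}"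
    and Hsub: "space k \<inter> {z. a \<bullet> z > b} \<subseteq> space k - H"
  shows "space k \<inter> closure S0 = space k \<inter> {z. a \<bullet> z \<ge> b}"
proof -
  let ?P = "space k \<inter> {z. a \<bullet> z > b}"
  have S0P: "S0 \<subseteq> ?P" using sub in_components_subset[OF S0] by blast
  have "S0 \<noteq> {} \<and> S0 \<subseteq> space k - H \<and> connected S0 \<and>
     (\<forall>D. D \<noteq> {} \<and> S0 \<subseteq> D \<and> D \<subseteq> space k - H \<and> connected D \<longrightarrow> D = S0)"
    by (rule iffD1[OF in_components_maximal S0])
  then have max: "\<And>D. D \<noteq> {} \<and> S0 \<subseteq> D \<and> D \<subseteq> space k - H \<and> connected D \<Longrightarrow> D = S0"
    by blast
  have "S0 \<noteq> {}" using in_components_nonempty[OF S0] .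
  then have ne: "?P \<noteq> {}" using S0P by blast
  have "?P = S0"
    by (rule max) (intro conjI ne S0P Hsub half_connected[OF kb])
  then have "space k \<inter> closure S0 = space k \<inter> closure ?P" by simp
  also have "\<dots> = space k \<inter> {z. a \<bullet> z \<ge> b}"
  proof
    have "closure ?P \<subseteq> {z. a \<bullet> z \<ge> b}"
      by (rule closure_minimal) (auto simp: closed_halfspace_ge)
    then show "space k \<inter> closure ?P \<subseteq> space k \<inter> {z. a \<bullet> z \<ge> b}" by blast
    show "space k \<inter> {z. a \<bullet> z \<ge> b} \<subseteq> space k \<inter> closure ?P"
      using half_closure[OF a kb] by blast
  qed
  finally show ?thesis .
qed

lemma halfspace_good:
  fixes H :: "'a::euclidean_space set"
  assumes "H \<in> hyperplanes k" "S \<in> halfspaces k H"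
  shows "\<exists>G. good k G \<and> S = space k \<inter> G"
proof -
  obtain a b where ab: "a \<noteq> 0" "H = space k \<inter> {z. a \<bullet> z = b}" "k \<noteq> Euc \<longrightarrow> b = 0"
    using hyperplane_normal[OF assms(1)] by blast
  obtain S0 where S0: "S = space k \<inter> closure S0" "S0 \<in> components (space k - H)"
    using assms(2) unfolding halfspaces_def by blast
  have "S0 \<subseteq> space k - H" using in_components_subset[OF S0(2)] .
  then have cov: "S0 \<subseteq> {z. a \<bullet> z > b} \<union> {z. a \<bullet> z < b}" using ab(2) by auto
  have "{z. a \<bullet> z > b} \<inter> S0 = {} \<or> {z. a \<bullet> z < b} \<inter> S0 = {}"
    by (rule connectedD[OF in_components_connected[OF S0(2)] open_halfspace_gt open_halfspace_lt])
       (use cov in auto)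
  then have "S0 \<subseteq> {z. a \<bullet> z > b} \<or> S0 \<subseteq> {z. (- a) \<bullet> z > - b}" using cov by auto
  then show ?thesis
  proof
    assume h: "S0 \<subseteq> {z. a \<bullet> z > b}"
    have Hs: "space k \<inter> {z. a \<bullet> z > b} \<subseteq> space k - H" using ab(2) by auto
    have "space k \<inter> closure S0 = space k \<inter> {z. a \<bullet> z \<ge> b}"
      by (rule halfspace_case[OF ab(1) ab(3) S0(2) h Hs])
    then have "S = space k \<inter> {z. a \<bullet> z \<ge> b}" using S0(1) by simp
    then show ?thesis using half_good[OF ab(1) ab(3)] by blast
  next
    assume h: "S0 \<subseteq> {z. (- a) \<bullet> z > - b}"
    have a': "- a \<noteq> 0" using ab by simp
    have kb': "k \<noteq> Euc \<longrightarrow> - b = 0" using ab by simp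
    have Hs: "space k \<inter> {z. (- a) \<bullet> z > - b} \<subseteq> space k - H" using ab(2) by auto
    have "space k \<inter> closure S0 = space k \<inter> {z. (- a) \<bullet> z \<ge> - b}"
      by (rule halfspace_case[OF a' kb' S0(2) h Hs])
    then have "S = space k \<inter> {z. (- a) \<bullet> z \<ge> - b}" using S0(1) by simp
    then show ?thesis using half_good[OF a' kb'] by blast
  qed
qed

lemma tile_good:
  fixes T :: "'a::euclidean_space set"
  assumes "polyhedron k T"
  shows "\<exists>G. good k G \<and> T = space k \<inter> G"
proof -
  obtain \<H> F where HF: "\<H> \<subseteq> hyperplanes k" "\<forall>S\<in>F. \<exists>H\<in>\<H>. S \<in> halfspaces k H"
    "T = space k \<inter> \<Inter>F"
    using assms unfolding polyhedron_def by blast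
  have FG: "\<forall>S\<in>F. \<exists>G. good k G \<and> S = space k \<inter> G"
  proof
    fix S assume "S \<in> F"
    then obtain H where H: "H \<in> \<H>" "S \<in> halfspaces k H" using HF(2) by blast
    have "H \<in> hyperplanes k" using H(1) HF(1) by blast
    then show "\<exists>G. good k G \<and> S = space k \<inter> G" using halfspace_good[OF _ H(2)] by blast
  qed
  define G where "G = \<Inter>{G. good k G \<and> space k \<inter> G \<in> F}"
  have "closed G" unfolding G_def by (rule closed_Inter) (simp add: good_def)
  moreover have "convex G" unfolding G_def by (rule convex_Inter) (simp add: good_def)
  moreover have "k \<noteq> Euc \<longrightarrow> cone G" unfolding G_def
    by (intro impI cone_Inter) (simp add: good_def)
  ultimately have "good k G" by (simp add: good_def)
  moreover have "T = space k \<inter> G"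
  proof
    show "T \<subseteq> space k \<inter> G"
    proof
      fix z assume z: "z \<in> T"
      have zs: "z \<in> space k" and zF: "\<And>S. S \<in> F \<Longrightarrow> z \<in> S" using z HF(3) by auto
      have "z \<in> G'" if G': "G' \<in> {G. good k G \<and> space k \<inter> G \<in> F}" for G'
      proof -
        have "space k \<inter> G' \<in> F" using G' by simp
        then have "z \<in> space k \<inter> G'" by (rule zF)
        then show ?thesis by simp
      qed
      then have "z \<in> G" unfolding G_def by (rule InterI)
      then show "z \<in> space k \<inter> G" using zs by simp
    qed
    show "space k \<inter> G \<subseteq> T"
    proof
      fix z assume z: "z \<in> space k \<inter> G"
      have "z \<in> S" if SF: "S \<in> F" for S
      proof -
        obtain G' where G': "good k G'" "S = space k \<inter> G'" using bspec[OF FG SF] by blast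
        then have "G' \<in> {G. good k G \<and> space k \<inter> G \<in> F}" using SF by simp
        then have "z \<in> G'" using z unfolding G_def by (meson IntD2 InterD)
        then show ?thesis using z G'(2) by simp
      qed
      then have "z \<in> \<Inter>F" by (rule InterI)
      then show "z \<in> T" using z HF(3) by simp
    qed
  qed
  ultimately show ?thesis by blast
qed

lemma int_G:
  assumes "good k G" "z \<in> int_X k (space k \<inter> G)"
  shows "z \<in> interior G"
proof -
  obtain r where r: "z \<in> space k" "z \<in> G" "r > 0" "ball z r \<inter> space k \<subseteq> space k \<inter> G"
    using assms(2) unfolding int_X_def by blast
  obtain d where d: "d > 0" "ball z d \<subseteq> Om k" "\<forall>w\<in>ball z d. NN k w \<in> ball z r"
    using near[OF r(1) r(3)] by blast
  have "ball z d \<subseteq> G"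
  proof
    fix w assume w: "w \<in> ball z d"
    then have "NN k w \<in> ball z r \<inter> space k" using d NN_space by blast
    then have "NN k w \<in> G" using r by blast
    then show "w \<in> G" using NN_mem[OF assms(1)] w d by blast
  qed
  then show ?thesis using d mem_interior by blast
qed

lemma U_intX:
  assumes gG: "good k G" and U: "open U" "U \<subseteq> Om k \<inter> G" "u \<in> U"
  shows "NN k u \<in> int_X k (space k \<inter> G)"
proof -
  define c where "c = cf k u"
  have uO: "u \<in> Om k" using U by blast
  have c: "c > 0" using cf_pos[OF uO] by (simp add: c_def)
  obtain \<rho> where rho: "\<rho> > 0" "ball u \<rho> \<subseteq> U" using U open_contains_ball_eq by blast
  have NNu: "NN k u \<in> space k \<inter> G" using NN_space[OF uO] NN_mem[OF gG uO] U by blast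
  have "ball (NN k u) (c * \<rho>) \<inter> space k \<subseteq> space k \<inter> G"
  proof
    fix q assume q: "q \<in> ball (NN k u) (c * \<rho>) \<inter> space k"
    have eq: "c *\<^sub>R u - q = c *\<^sub>R (u - (1 / c) *\<^sub>R q)" using c by (simp add: algebra_simps)
    have "norm (c *\<^sub>R u - q) < c * \<rho>" using q by (simp add: dist_norm NN_def c_def)
    then have "c * norm (u - (1 / c) *\<^sub>R q) < c * \<rho>" unfolding eq using c by simp
    then have "norm (u - (1 / c) *\<^sub>R q) < \<rho>" using c by simp
    then have "(1 / c) *\<^sub>R q \<in> U" using rho by (auto simp: dist_norm)
    then have "(1 / c) *\<^sub>R q \<in> G" using U by blast
    then have "c *\<^sub>R ((1 / c) *\<^sub>R q) \<in> G" using scale_mem[OF gG uO, of "(1 / c) *\<^sub>R q"] unfolding c_def by blast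
    then show "q \<in> space k \<inter> G" using q c by simp
  qed
  then show ?thesis unfolding int_X_def using NNu c rho by (auto intro!: exI[of _ "c * \<rho>"])
qed

lemma plane_hull_eq:
  fixes C :: "'a::euclidean_space set"
  assumes "C \<noteq> {}" "C \<subseteq> space k"
  shows "plane_hull k C = space k \<inter> fhull k C"
proof
  have "space k \<inter> fhull k C \<in> planes k"
  proof -
    have "ambient_flat k (fhull k C)"
      by (auto simp: ambient_flat_def fhull_def affine_affine_hull)
    moreover have "C \<subseteq> fhull k C"
      by (auto simp: fhull_def hull_subset span_superset)
    ultimately show ?thesis unfolding planes_def using assms by blast
  qed
  moreover have "C \<subseteq> space k \<inter> fhull k C" using assms by (auto simp: fhull_def hull_subset span_superset)
  ultimately show "plane_hull k C \<subseteq> space k \<inter> fhull k C"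
    unfolding plane_hull_def by blast
next
  show "space k \<inter> fhull k C \<subseteq> plane_hull k C"
    unfolding plane_hull_def
  proof (rule Inter_greatest)
    fix P assume "P \<in> {P \<in> planes k. C \<subseteq> P}"
    then obtain A where A: "P = space k \<inter> A" "ambient_flat k A" "C \<subseteq> P"
      unfolding planes_def by blast
    have CA: "C \<subseteq> A" using A by blast
    have "fhull k C \<subseteq> A"
    proof (cases "k = Euc")
      case True
      then have "affine A" using A(2) by (simp add: ambient_flat_def)
      then show ?thesis using True CA by (simp add: fhull_def hull_minimal)
    next
      case False
      then have "subspace A" using A(2) by (simp add: ambient_flat_def)
      then show ?thesis using False CA by (simp add: fhull_def span_minimal)
    qed
    then show "space k \<inter> fhull k C \<subseteq> P" using A by blast
  qed
qed



theorem lemma4p2: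
  fixes k :: geom and \<T> :: "'a::euclidean_space set set" and x :: 'a
  assumes "locally_finite_tess k \<T>" and "x \<in> space k"
  shows "cell k \<T> (\<Inter>{T \<in> \<T>. x \<in> T}) \<and> x \<in> rel_int k (\<Inter>{T \<in> \<T>. x \<in> T})"
proof -
  note lf = assms(1) and xs = assms(2)
  have tess: "tessellation k \<T>"
    and cpt: "\<And>K. compact K \<Longrightarrow> K \<subseteq> space k \<Longrightarrow> finite {T \<in> \<T>. T \<inter> K \<noteq> {}}"
    using lf unfolding locally_finite_tess_def by auto
  have tiles: "\<And>T. T \<in> \<T> \<Longrightarrow> polyhedron k T \<and> thick k T" and cover: "\<Union>\<T> = space k"
    and disj: "\<And>T1 T2. T1 \<in> \<T> \<Longrightarrow> T2 \<in> \<T> \<Longrightarrow> T1 \<noteq> T2 \<Longrightarrow> int_X k T1 \<inter> int_X k T2 = {}"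
    using tess unfolding tessellation_def by auto
  define Gt where "Gt = (\<lambda>T::'a set. SOME G::'a set. good k G \<and> T = space k \<inter> G)"
  have Gt: "good k (Gt T) \<and> T = space k \<inter> Gt T" if T: "T \<in> \<T>" for T
  proof -
    have "\<exists>G. good k G \<and> T = space k \<inter> G" using tiles[OF T] tile_good by blast
    then show ?thesis unfolding Gt_def by (rule someI_ex)
  qed
  have Ggood: "good k (Gt T)" if "T \<in> \<T>" for T using Gt[OF that] by blast
  have GtE: "space k \<inter> Gt T = T" if "T \<in> \<T>" for T using Gt[OF that] by metis
  have Tclosed: "closed T" if T: "T \<in> \<T>" for T
  proof -
    have "closed (space k \<inter> Gt T)"
      using Ggood[OF T] closed_space by (intro closed_Int) (auto simp: good_def)
    then show "closed T" using GtE[OF T] by simp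
  qed
  have intG: "interior (Gt T) \<noteq> {}" if T: "T \<in> \<T>" for T
  proof -
    obtain z where "z \<in> int_X k T" using tiles[OF T] unfolding thick_def by blast
    then have "z \<in> int_X k (space k \<inter> Gt T)" using GtE[OF T] by simp
    then show ?thesis using int_G Ggood[OF T] by blast
  qed
  have clash: False
    if a: "T1 \<in> \<T>" "T2 \<in> \<T>" "T1 \<noteq> T2" "open U" "U \<noteq> {}" "U \<subseteq> Om k \<inter> Gt T1 \<inter> Gt T2"
    for T1 T2 U
  proof -
    obtain u where u: "u \<in> U" using a by blast
    have "NN k u \<in> int_X k (space k \<inter> Gt T1)"
      by (rule U_intX[OF Ggood[OF a(1)] a(4) _ u]) (use a in blast)
    moreover have "NN k u \<in> int_X k (space k \<inter> Gt T2)"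
      by (rule U_intX[OF Ggood[OF a(2)] a(4) _ u]) (use a in blast)
    ultimately have "NN k u \<in> int_X k T1 \<inter> int_X k T2" using GtE[OF a(1)] GtE[OF a(2)] by simp
    then show False using disj[OF a(1-3)] by blast
  qed
  define I where "I = {T \<in> \<T>. x \<in> T}"
  have II: "T \<in> \<T>" "x \<in> T" if "T \<in> I" for T using that by (auto simp: I_def)
  have fI: "finite I"
  proof -
    have "finite {T \<in> \<T>. T \<inter> {x} \<noteq> {}}" using cpt[of "{x}"] xs by auto
    moreover have "{T \<in> \<T>. T \<inter> {x} \<noteq> {}} = I" unfolding I_def by auto
    ultimately show ?thesis by simp
  qed
  have neI: "I \<noteq> {}" using cover xs unfolding I_def by blast
  define C where "C = \<Inter>I"
  define D where "D = \<Inter>(Gt ` I)"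
  have CD: "C = space k \<inter> D"
  proof
    show "C \<subseteq> space k \<inter> D"
    proof
      fix z assume z: "z \<in> C"
      obtain T0 where T0: "T0 \<in> I" using neI by blast
      have "z \<in> T0" using z T0 unfolding C_def by blast
      then have zs: "z \<in> space k" using GtE[OF II(1)[OF T0]] by blast
      have "z \<in> Gt T" if T: "T \<in> I" for T
      proof -
        have "z \<in> T" using z T unfolding C_def by blast
        then show ?thesis using GtE[OF II(1)[OF T]] by blast
      qed
      then show "z \<in> space k \<inter> D" using zs unfolding D_def by blast
    qed
  next
    show "space k \<inter> D \<subseteq> C"
    proof
      fix z assume z: "z \<in> space k \<inter> D"
      have "z \<in> T" if T: "T \<in> I" for T
      proof -
        have "z \<in> space k \<inter> Gt T" using z T unfolding D_def by blast
        then show ?thesis using GtE[OF II(1)[OF T]] by simp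
      qed
      then show "z \<in> C" unfolding C_def by blast
    qed
  qed
  have xC: "x \<in> C" unfolding C_def I_def by blast
  have xD: "x \<in> D" using xC CD by blast
  have convD: "convex D" unfolding D_def
    by (rule convex_Inter) (use Ggood II in \<open>auto simp: good_def\<close>)
  have gjI: "\<forall>j\<in>I. convex (Gt j) \<and> closed (Gt j)" using Ggood II by (auto simp: good_def)

  have step4: "\<exists>e>0. \<forall>z\<in>ball x e \<inter> space k. \<exists>T\<in>I. z \<in> T"
  proof -
    define K where "K = cball x 1 \<inter> space k"
    have "compact K" unfolding K_def by (rule compact_Int_closed[OF compact_cball closed_space])
    then have fF: "finite {T \<in> \<T>. T \<inter> K \<noteq> {}}" using cpt K_def by auto
    define F' where "F' = {T \<in> \<T>. T \<inter> K \<noteq> {} \<and> x \<notin> T}"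
    have "finite F'" using fF unfolding F'_def by (rule rev_finite_subset) auto
    then have cF: "closed (\<Union>F')" using Tclosed unfolding F'_def by (intro closed_Union) auto
    have xF: "x \<notin> \<Union>F'" unfolding F'_def by auto
    have "\<exists>e>0. ball x e \<subseteq> - \<Union>F'"
      using iffD1[OF open_contains_ball_eq[OF open_Compl[OF cF]]] xF by simp
    then obtain e0 where e0: "e0 > 0" "ball x e0 \<subseteq> - \<Union>F'" by blast
    define e where "e = min e0 1"
    have "\<forall>z\<in>ball x e \<inter> space k. \<exists>T\<in>I. z \<in> T"
    proof
      fix z assume z: "z \<in> ball x e \<inter> space k"
      then obtain T where T: "T \<in> \<T>" "z \<in> T" using cover by blast
      have zK: "z \<in> K" using z by (auto simp: K_def e_def)
      have "x \<in> T"
      proof (rule ccontr)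
        assume "x \<notin> T"
        then have "T \<in> F'" using T zK unfolding F'_def by auto
        moreover have "z \<in> ball x e0" using z by (auto simp: e_def)
        ultimately show False using e0 T by blast
      qed
      then show "\<exists>T\<in>I. z \<in> T" using T unfolding I_def by auto
    qed
    moreover have "e > 0" using e0 by (simp add: e_def)
    ultimately show ?thesis by blast
  qed
  then obtain e1 where e1: "e1 > 0" "\<forall>z\<in>ball x e1 \<inter> space k. \<exists>T\<in>I. z \<in> T" by blast
  obtain e2 where e2: "e2 > 0" "ball x e2 \<subseteq> Om k" "\<forall>w\<in>ball x e2. NN k w \<in> ball x e1"
    using near[OF xs e1(1)] by blast
  have cov: "ball x e2 \<subseteq> \<Union>(Gt ` I)"
  proof
    fix w assume w: "w \<in> ball x e2"
    then have wO: "w \<in> Om k" using e2 by blast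
    have "NN k w \<in> ball x e1 \<inter> space k" using e2 w NN_space[OF wO] by blast
    then obtain T where T: "T \<in> I" "NN k w \<in> T" using e1 by blast
    have "NN k w \<in> space k \<inter> Gt T" using T(2) GtE[OF II(1)[OF T(1)]] by simp
    then have "w \<in> Gt T" using NN_mem[OF Ggood[OF II(1)[OF T(1)]] wO] by blast
    then show "w \<in> \<Union>(Gt ` I)" using T by blast
  qed

  have pert: "\<exists>\<epsilon>>0. x - \<epsilon> *\<^sub>R (d - x) \<in> Gt i" if d: "d \<in> D" and i: "i \<in> I" for d i
  proof (rule ccontr)
    assume nex: "\<not> (\<exists>\<epsilon>>0. x - \<epsilon> *\<^sub>R (d - x) \<in> Gt i)"
    have iT: "i \<in> \<T>" using II i by blast
    have xi: "x \<in> Gt i" using xD i unfolding D_def by blast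
    have dx: "d \<noteq> x"
    proof
      assume "d = x"
      then have "x - 1 *\<^sub>R (d - x) \<in> Gt i" using xi by simp
      then show False using nex by (meson zero_less_one)
    qed
    then have nd: "norm (d - x) > 0" by simp
    define \<epsilon> where "\<epsilon> = e2 / (2 * norm (d - x))"
    have eps: "\<epsilon> > 0" using e2 nd by (simp add: \<epsilon>_def)
    define p where "p = x - \<epsilon> *\<^sub>R (d - x)"
    have pG: "p \<notin> Gt i" using nex eps unfolding p_def by blast
    have "dist x p = \<epsilon> * norm (d - x)" using eps by (simp add: p_def dist_norm)
    also have "\<dots> = e2 / 2" using nd by (simp add: \<epsilon>_def)
    finally have dpx: "dist x p = e2 / 2" .
    have oG: "open (- Gt i)" using Ggood[OF iT] by (simp add: good_def open_Compl)
    have "\<exists>e>0. ball p e \<subseteq> - Gt i"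
      using iffD1[OF open_contains_ball_eq[OF oG]] pG by simp
    then obtain \<rho>0 where rho0: "\<rho>0 > 0" "ball p \<rho>0 \<subseteq> - Gt i" by blast
    define \<rho> where "\<rho> = min \<rho>0 (e2 / 2)"
    have rho: "\<rho> > 0" using rho0 e2 by (simp add: \<rho>_def)
    have bp: "ball p \<rho> \<subseteq> \<Union>(Gt ` (I - {i}))"
    proof
      fix w assume w: "w \<in> ball p \<rho>"
      have "dist x w \<le> dist x p + dist p w" by (rule dist_triangle)
      also have "\<dots> < e2" using w dpx by (simp add: \<rho>_def)
      finally have "w \<in> ball x e2" by simp
      then have "w \<in> \<Union>(Gt ` I)" using cov by blast
      moreover have "w \<notin> Gt i" using w rho0 by (auto simp: \<rho>_def)
      ultimately show "w \<in> \<Union>(Gt ` (I - {i}))" by blast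
    qed
    have qeq: "x - (1 / \<epsilon>) *\<^sub>R (p - x) = d" using eps by (simp add: p_def)
    have core_q: "\<forall>j\<in>I - {i}. x - (1 / \<epsilon>) *\<^sub>R (p - x) \<in> Gt j"
      unfolding qeq using d unfolding D_def by blast
    have ci: "convex (Gt i)" using Ggood[OF iT] by (simp add: good_def)
    have fIi: "finite (I - {i})" using fI by simp
    have gj: "\<forall>j\<in>I - {i}. convex (Gt j) \<and> closed (Gt j)" using gjI by blast
    have s: "1 / \<epsilon> > 0" using eps by simp
    obtain j U where jU: "j \<in> I - {i}" "open U" "U \<noteq> {}" "U \<subseteq> Gt i \<inter> Gt j \<inter> ball x e2"
      using core[OF ci xi intG[OF iT] fIi gj rho bp s core_q e2(1)] by blast
    have "j \<in> \<T>" "j \<noteq> i" using jU II by auto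
    moreover have "U \<subseteq> Om k \<inter> Gt i \<inter> Gt j" using jU e2(2) by blast
    ultimately show False using clash[of i j U] iT jU by blast
  qed

  have relD: "x \<in> rel_interior D"
  proof -
    have neD: "D \<noteq> {}" using xD by blast
    have "\<forall>d\<in>D. \<exists>e>1. (1 - e) *\<^sub>R d + e *\<^sub>R x \<in> D"
    proof
      fix d assume d: "d \<in> D"
      have ev: "\<forall>i\<in>I. eventually (\<lambda>\<epsilon>. x - \<epsilon> *\<^sub>R (d - x) \<in> Gt i) (at_right 0)"
      proof
        fix i assume i: "i \<in> I"
        obtain \<epsilon> where eps: "\<epsilon> > 0" "x - \<epsilon> *\<^sub>R (d - x) \<in> Gt i" using pert[OF d i] by blast
        have xi: "x \<in> Gt i" using xD i unfolding D_def by blast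
        have ci: "convex (Gt i)" using gjI i by blast
        show "eventually (\<lambda>\<epsilon>. x - \<epsilon> *\<^sub>R (d - x) \<in> Gt i) (at_right 0)"
          unfolding eventually_at_right_field
        proof (intro exI[of _ \<epsilon>] conjI allI impI)
          show "0 < \<epsilon>" using eps by simp
          fix t :: real assume t: "0 < t" "t < \<epsilon>"
          have "(1 - t / \<epsilon>) *\<^sub>R x + (t / \<epsilon>) *\<^sub>R (x - \<epsilon> *\<^sub>R (d - x)) \<in> Gt i"
            by (rule convexD[OF ci xi eps(2)]) (use t eps in auto)
          moreover have "(1 - t / \<epsilon>) *\<^sub>R x + (t / \<epsilon>) *\<^sub>R (x - \<epsilon> *\<^sub>R (d - x)) = x - t *\<^sub>R (d - x)"
            using eps by (simp add: algebra_simps)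
          ultimately show "x - t *\<^sub>R (d - x) \<in> Gt i" by simp
        qed
      qed
      have "eventually (\<lambda>\<epsilon>. \<forall>i\<in>I. x - \<epsilon> *\<^sub>R (d - x) \<in> Gt i) (at_right 0)"
        using eventually_ball_finite[OF fI ev] .
      then obtain b :: real where b: "b > 0" "\<forall>t>0. t < b \<longrightarrow> (\<forall>i\<in>I. x - t *\<^sub>R (d - x) \<in> Gt i)"
        unfolding eventually_at_right_field by auto
      have "\<forall>i\<in>I. x - (b / 2) *\<^sub>R (d - x) \<in> Gt i" using b by simp
      then have mem: "x - (b / 2) *\<^sub>R (d - x) \<in> D" unfolding D_def by blast
      have "(1 - (1 + b / 2)) *\<^sub>R d + (1 + b / 2) *\<^sub>R x = x - (b / 2) *\<^sub>R (d - x)"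
        by (simp add: algebra_simps)
      then show "\<exists>e>1. (1 - e) *\<^sub>R d + e *\<^sub>R x \<in> D" using mem b by (intro exI[of _ "1 + b / 2"]) auto
    qed
    then show ?thesis using convex_rel_interior_iff[OF convD neD] by blast
  qed

  have CsubD: "C \<subseteq> D" using CD by blast
  have fhD: "fhull k C \<subseteq> affine hull D"
  proof (cases "k = Euc")
    case True then show ?thesis using CsubD by (simp add: fhull_def hull_mono)
  next
    case False
    have "cone D" unfolding D_def
      by (rule cone_Inter) (use Ggood II False in \<open>auto simp: good_def\<close>)
    then have "0 \<in> D" using cone_contains_0 xD by blast
    then have "affine hull D = span D" by (intro affine_hull_span_0 hull_inc)
    moreover have "span C \<subseteq> span D" using CsubD by (rule span_mono)
    ultimately show ?thesis using False by (simp add: fhull_def)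
  qed
  have PH: "plane_hull k C = space k \<inter> fhull k C"
    by (rule plane_hull_eq) (use xC CD in auto)
  have relC: "x \<in> rel_int k C"
  proof -
    obtain e3 where e3: "e3 > 0" "ball x e3 \<inter> affine hull D \<subseteq> D"
      using relD mem_rel_interior_ball by blast
    have "ball x e3 \<inter> plane_hull k C \<subseteq> C" using e3 PH fhD CD by blast
    then show ?thesis unfolding rel_int_def using xC e3 by blast
  qed

  have sep: "rel_int k C \<inter> T = {}" if T: "T \<in> \<T>" "x \<notin> T" for T
  proof (rule ccontr)
    assume "rel_int k C \<inter> T \<noteq> {}"
    then obtain y where y: "y \<in> rel_int k C" "y \<in> T" by blast
    obtain e' where e': "y \<in> C" "e' > 0" "ball y e' \<inter> plane_hull k C \<subseteq> C"
      using y(1) unfolding rel_int_def by blast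
    have ys: "y \<in> space k" using e' CD by blast
    obtain \<delta> where dl: "\<delta> > 0" "ball y \<delta> \<subseteq> Om k" "\<forall>w\<in>ball y \<delta>. NN k w \<in> ball y e'"
      using near[OF ys e'(2)] by blast
    have den: "2 * (norm (x - y) + 1) > 0" by (simp add: add_nonneg_pos)
    define s where "s = \<delta> / (2 * (norm (x - y) + 1))"
    have s: "s > 0" using dl den by (simp add: s_def)
    have "s * norm (x - y) \<le> s * (norm (x - y) + 1)" using s by simp
    also have "\<dots> = \<delta> / 2"
    proof -
      have nz: "norm (x - y) + 1 \<noteq> 0" using den by simp
      show ?thesis using nz by (simp add: s_def field_simps)
    qed
    finally have sl: "s * norm (x - y) < \<delta>" using dl by simp
    define q where "q = y - s *\<^sub>R (x - y)"
    have qb: "q \<in> ball y \<delta>" using sl s by (simp add: q_def dist_norm)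
    have qO: "q \<in> Om k" using qb dl by blast
    have "(1 + s) *\<^sub>R y + (- s) *\<^sub>R x \<in> affine hull C"
      by (rule mem_affine[OF affine_affine_hull hull_inc[OF e'(1)] hull_inc[OF xC]]) simp
    moreover have "(1 + s) *\<^sub>R y + (- s) *\<^sub>R x = q" by (simp add: q_def algebra_simps)
    ultimately have qaff: "q \<in> affine hull C" by simp
    have qf: "NN k q \<in> fhull k C"
    proof (cases "k = Euc")
      case True then show ?thesis using qaff by (simp add: NN_def cf_def fhull_def)
    next
      case False
      have "q \<in> span C" using qaff affine_hull_subset_span by blast
      then show ?thesis using False by (simp add: NN_def fhull_def span_mul)
    qed
    have "NN k q \<in> ball y e' \<inter> plane_hull k C" using dl qb NN_space[OF qO] qf PH by blast
    then have "NN k q \<in> C" using e' by blast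
    then have NqD: "NN k q \<in> D" using CD by blast
    have qq: "\<forall>j\<in>I. y - s *\<^sub>R (x - y) \<in> Gt j"
    proof
      fix j assume j: "j \<in> I"
      have "NN k q \<in> Gt j" using NqD j unfolding D_def by blast
      then have "q \<in> Gt j" using NN_mem[OF Ggood[OF II(1)[OF j]] qO] by blast
      then show "y - s *\<^sub>R (x - y) \<in> Gt j" by (simp add: q_def)
    qed
    have yG: "y \<in> Gt T" using y(2) GtE[OF T(1)] by blast
    have TnI: "T \<notin> I" using T unfolding I_def by auto
    have convT: "convex (Gt T)" using Ggood[OF T(1)] by (simp add: good_def)
    obtain j U where jU: "j \<in> I" "open U" "U \<noteq> {}" "U \<subseteq> Gt T \<inter> Gt j \<inter> ball y \<delta>"
      using core[OF convT yG intG[OF T(1)] fI gjI e2(1) cov s qq dl(1)] by blast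
    have "j \<in> \<T>" "T \<noteq> j" using jU II TnI by auto
    moreover have "U \<subseteq> Om k \<inter> Gt T \<inter> Gt j" using jU dl(2) by blast
    ultimately show False using clash[of T j U] T jU by blast
  qed

  have "cell k \<T> C"
    unfolding cell_def
  proof (intro conjI)
    show "C \<noteq> {}" using xC by blast
    show "\<exists>\<S>. \<S> \<noteq> {} \<and> \<S> \<subseteq> \<T> \<and> C = \<Inter>\<S>"
      using neI unfolding C_def I_def by blast
    show "\<forall>T\<in>\<T>. C \<subseteq> T \<or> rel_int k C \<inter> T = {}"
    proof
      fix T assume T: "T \<in> \<T>"
      show "C \<subseteq> T \<or> rel_int k C \<inter> T = {}"
      proof (cases "x \<in> T")
        case True then have "T \<in> I" using T unfolding I_def by simp
        then show ?thesis unfolding C_def by blast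
      next
        case False then show ?thesis using sep[OF T] by blast
      qed
    qed
  qed
  then show ?thesis using relC unfolding C_def I_def by simp
qed


end
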